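(* Let $F\colon Q^S\to Q^B$ be one of the weighted foldings in the context, with $S$ the integer exchange matrix of $Q^S$ and $B=(b_{[i][j]})$ the exchange matrix of $Q^B$. Then there is an ordering of $Q^S_0$ such that, writing $S$ as a block matrix $(S_{[i][j]})$ whose $([i],[j])$ block consists of the entries indexed by $(k,l)$ with $F(k)=[i]$, $F(l)=[j]$ (each block $n\times n$), one has $S_{[i][j]}=\rho(b'_{[i][j]})$ for some $b'_{[i][j]}\in\Lambda_{2n+1}$ with $\sigma_{2n+1}(b'_{[i][j]})=b_{[i][j]}$.
   Context: Foldings: (I) $n\ge2$, $Q^S=Q^{A_{2n}}$ on vertices $0..2n-1$ with arrows between $i,i+1$, bipartite (even vertices all sources or all sinks), vertex weights $U_i(\cos\frac{\pi}{2n+1})$, onto $Q^B=Q^{I_2(2n+1)}$ (vertices $[0],[1]$, one arrow of weight $2\cos\frac{\pi}{2n+1}$ oriented like arrows from even to odd vertices), $F(i)=[i\bmod2]$. (H) $n=2$, $m\in\{3,4\}$, $Q^S$ of type $D_6/E_8$ on vertices $1..m,\phi_1..\phi_m$, edges $i-(i+1)$, $\phi_i-\phi_{i+1}$ ($i\le m-2$), $(m-1)-\phi_m$, $\phi_{m-1}-m$, $\phi_{m-1}-\phi_m$, edges between consecutive columns $\{i,\phi_i\},\{i+1,\phi_{i+1}\}$ oriented alike, weights $1$ on $i$, $2\cos\frac\pi5$ on $\phi_i$, onto the path $Q^{H_m}$ ($i,\phi_i\mapsto[i]$, arrow weights $1$ except $2\cos\frac\pi5$ on $[m-1]-[m]$,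 orientations as in $Q^S$). Exchange matrices: $b_{ij}$ = weight of arrow $i\to j$, minus weight of $j\to i$, $0$ if none. $\Lambda_{2n+1}$ is the commutative ring generated over $\mathbb Z$ by $\psi_1,\dots,\psi_{n-1}$ with $\psi_k\psi_l=\sum_{j=0}^l\psi_{k-l+2j}$ ($k\ge l$), where $\psi_0=1$, $\psi_{2n}=0$, $\psi_k=\psi_{2n-1-k}$ ($k<2n$); $\{\psi_0,\dots,\psi_{n-1}\}$ is a $\mathbb Z$-basis. $\rho\colon\Lambda_{2n+1}\to\mathbb Z^{n\times n}$ is the regular representation in this basis: $\rho(r)v(s)=v(rs)$, where $v(s)\in\mathbb Z^n$ is the coordinate vector of $s$. $\sigma_{2n+1}\colon\Lambda_{2n+1}\to\mathbb Z[2\cos\frac{\pi}{2n+1}]$ is the ring homomorphism with $\psi_k\mapsto U_k(\cos\frac{\pi}{2n+1})$. *)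

theory Defs
  imports Complex_Main
begin

text \<open>A weighted quiver is given by its set of arrows (pairs (i,j) meaning an arrow i -> j)
  together with a weight for each arrow.\<close>

definition exch_matrix :: "('v \<times> 'v) set \<Rightarrow> ('v \<times> 'v \<Rightarrow> 'a::ab_group_add) \<Rightarrow> 'v \<Rightarrow> 'v \<Rightarrow> 'a" where
  "exch_matrix arr w i j =
     (if (i, j) \<in> arr then w (i, j) else 0) - (if (j, i) \<in> arr then w (j, i) else 0)"

fun chebU :: "nat \<Rightarrow> real \<Rightarrow> real" where
  "chebU 0 x = 1"
| "chebU (Suc 0) x = 2 * x"
| "chebU (Suc (Suc k)) x = 2 * x * chebU (Suc k) x - chebU k x"

text \<open>An element r of Lambda_{2n+1} is represented by its coordinate vector
  r :: nat => int (only the coordinates 0..n-1 are used): r = sum_{k<n} r k * psi_k.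
  For 0 <= m <= 2n-2, the basis index of psi_m after the reductions
  psi_k = psi_{2n-1-k} (k < 2n).\<close>

definition psi_red :: "nat \<Rightarrow> nat \<Rightarrow> nat" where
  "psi_red n m = (if m < n then m else 2 * n - 1 - m)"

text \<open>Structure constants: coefficient of psi_a in psi_k * psi_l (k, l < n), using
  psi_k psi_l = sum_{j=0}^{l} psi_{k-l+2j} for k >= l (and commutativity).\<close>

definition lam_coeff :: "nat \<Rightarrow> nat \<Rightarrow> nat \<Rightarrow> nat \<Rightarrow> int" where
  "lam_coeff n k l a =
     (let k' = max k l; l' = min k l in
      int (card {j \<in> {0..l'}. psi_red n (k' - l' + 2 * j) = a}))"

text \<open>Regular representation rho: rho(r) v(s) = v(r s). Column b of rho(r) is v(r psi_b),
  so the (a,b) entry is the psi_a coordinate of r * psi_b.\<close>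

definition lam_rho :: "nat \<Rightarrow> (nat \<Rightarrow> int) \<Rightarrow> nat \<Rightarrow> nat \<Rightarrow> int" where
  "lam_rho n r a b = (\<Sum>k<n. r k * lam_coeff n k b a)"

definition lam_sigma :: "nat \<Rightarrow> (nat \<Rightarrow> int) \<Rightarrow> real" where
  "lam_sigma n r = (\<Sum>k<n. of_int (r k) * chebU k (cos (pi / real (2 * n + 1))))"

text \<open>There is an ordering of the vertices of Q^S, i.e. for each vertex c of Q^B an
  enumeration e c 0, ..., e c (n-1) of the fibre F^{-1}(c), such that every block
  S_{[c][d]} equals rho(b') for some b' in Lambda_{2n+1} with sigma(b') = b_{[c][d]}.\<close>

definition block_form ::
  "nat \<Rightarrow> 'v set \<Rightarrow> 'c set \<Rightarrow> ('v \<Rightarrow> 'c) \<Rightarrow> ('v \<Rightarrow> 'v \<Rightarrow> int) \<Rightarrow> ('c \<Rightarrow> 'c \<Rightarrow> real) \<Rightarrow> bool" where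
  "block_form n V C F S B \<longleftrightarrow>
     (\<exists>e :: 'c \<Rightarrow> nat \<Rightarrow> 'v.
        (\<forall>c\<in>C. bij_betw (e c) {..<n} {v \<in> V. F v = c}) \<and>
        (\<forall>c\<in>C. \<forall>d\<in>C. \<exists>b' :: nat \<Rightarrow> int.
            lam_sigma n b' = B c d \<and>
            (\<forall>a<n. \<forall>b<n. S (e c a) (e d b) = lam_rho n b' a b)))"

section \<open>Folding (I): A_{2n} onto I_2(2n+1)\<close>

text \<open>Vertices 0..2n-1, arrows between i and i+1; if evsrc then all even vertices are
  sources (arrows even -> odd), otherwise all even vertices are sinks.\<close>

definition arrows_I :: "nat \<Rightarrow> bool \<Rightarrow> (nat \<times> nat) set" where
  "arrows_I n evsrc = {(i, j). i < 2 * n \<and> j < 2 * n \<and> (j = i + 1 \<or> i = j + 1) \<and>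
                              (even i \<longleftrightarrow> evsrc)}"

definition S_I :: "nat \<Rightarrow> bool \<Rightarrow> nat \<Rightarrow> nat \<Rightarrow> int" where
  "S_I n evsrc = exch_matrix (arrows_I n evsrc) (\<lambda>_. 1)"

definition arrows_BI :: "bool \<Rightarrow> (nat \<times> nat) set" where
  "arrows_BI evsrc = (if evsrc then {(0, 1)} else {(1, 0)})"

definition B_I :: "nat \<Rightarrow> bool \<Rightarrow> nat \<Rightarrow> nat \<Rightarrow> real" where
  "B_I n evsrc = exch_matrix (arrows_BI evsrc) (\<lambda>_. 2 * cos (pi / real (2 * n + 1)))"

definition F_I :: "nat \<Rightarrow> nat" where
  "F_I i = i mod 2"

section \<open>Folding (H): D_6 / E_8 onto H_3 / H_4\<close>

text \<open>Vertex (i, False) stands for i, vertex (i, True) for phi_i, 1 <= i <= m.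
  The column of a vertex is its first component.\<close>

definition V_H :: "nat \<Rightarrow> (nat \<times> bool) set" where
  "V_H m = {1..m} \<times> UNIV"

text \<open>Underlying edges, each written (u, v) with u in column i and v in column i+1.\<close>

definition edges_H :: "nat \<Rightarrow> ((nat \<times> bool) \<times> (nat \<times> bool)) set" where
  "edges_H m =
     {((i, False), (i + 1, False)) | i. 1 \<le> i \<and> i \<le> m - 2} \<union>
     {((i, True), (i + 1, True)) | i. 1 \<le> i \<and> i \<le> m - 2} \<union>
     {((m - 1, False), (m, True)), ((m - 1, True), (m, False)), ((m - 1, True), (m, True))}"

definition arrows_H :: "nat \<Rightarrow> (nat \<Rightarrow> bool) \<Rightarrow> ((nat \<times> bool) \<times> (nat \<times> bool)) set" where
  "arrows_H m dir = {(u, v). (u, v) \<in> edges_H m \<and> dir (fst u)} \<union>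
                    {(v, u). (u, v) \<in> edges_H m \<and> \<not> dir (fst u)}"

definition S_H :: "nat \<Rightarrow> (nat \<Rightarrow> bool) \<Rightarrow> (nat \<times> bool) \<Rightarrow> (nat \<times> bool) \<Rightarrow> int" where
  "S_H m dir = exch_matrix (arrows_H m dir) (\<lambda>_. 1)"

definition arrows_BH :: "nat \<Rightarrow> (nat \<Rightarrow> bool) \<Rightarrow> (nat \<times> nat) set" where
  "arrows_BH m dir = {(i, i + 1) | i. 1 \<le> i \<and> i < m \<and> dir i} \<union>
                     {(i + 1, i) | i. 1 \<le> i \<and> i < m \<and> \<not> dir i}"

definition B_H :: "nat \<Rightarrow> (nat \<Rightarrow> bool) \<Rightarrow> nat \<Rightarrow> nat \<Rightarrow> real" where
  "B_H m dir = exch_matrix (arrows_BH m dir)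
                 (\<lambda>(i, j). if {i, j} = {m - 1, m} then 2 * cos (pi / 5) else 1)"

definition F_H :: "nat \<times> bool \<Rightarrow> nat" where
  "F_H v = fst v"

end

theory Submission
  imports Defs
begin

lemma S_I_val:
  assumes "i < 2*n" "j < 2*n"
  shows "S_I n evsrc i j = (if j = i+1 \<or> i = j+1 then (if even i = evsrc then 1 else -1) else 0)"
  using assms by (auto simp: S_I_def exch_matrix_def arrows_I_def)

lemma psi_red_lt: "m < n \<Longrightarrow> psi_red n m = m"
  by (simp add: psi_red_def)

lemma e01: "{j \<in> {0..1::nat}. P j} = (if P 0 then {0} else {}) \<union> (if P 1 then {1} else {})"
proof (rule set_eqI)
  fix x :: nat
  have "x \<in> {0..1} \<longleftrightarrow> x = 0 \<or> x = 1" by auto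
  then show "x \<in> {j \<in> {0..1::nat}. P j} \<longleftrightarrow> x \<in> (if P 0 then {0} else {}) \<union> (if P 1 then {1} else {})"
    by (cases "P 0"; cases "P 1") auto
qed

lemma lam_coeff_1:
  assumes "n \<ge> 2" "a < n" "b < n"
  shows "lam_coeff n 1 b a = (if a = b+1 \<or> b = a+1 \<or> (a = n-1 \<and> b = n-1) then 1 else 0)"
proof (cases "b = 0")
  case True
  have r: "psi_red n 1 = 1" using assms by (simp add: psi_red_def)
  have "{j \<in> {0..0::nat}. psi_red n (1 + 2 * j) = a} = (if a = 1 then {0} else {})"
    using r by auto
  then show ?thesis using True assms by (auto simp: lam_coeff_def)
next
  case False
  have mx: "max 1 b = b" "min 1 b = 1" using False by auto
  have r0: "psi_red n (b - 1 + 2 * 0) = b - 1" using assms by (simp add: psi_red_def)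
  have r1: "psi_red n (b - 1 + 2 * 1) = (if b + 1 < n then b + 1 else n - 1)"
  proof -
    have bb: "b - 1 + 2 * 1 = b + 1" using False by simp
    show ?thesis
    proof (cases "b + 1 < n")
      case True then show ?thesis unfolding bb psi_red_def by simp
    next
      case F: False
      then have "b = n - 1" using assms by linarith
      then show ?thesis unfolding bb psi_red_def using F assms by simp
    qed
  qed
  define c0 where "c0 = (b - 1 = a)"
  define c1 where "c1 = ((if b + 1 < n then b + 1 else n - 1) = a)"
  have "lam_coeff n 1 b a = int (card ((if c0 then {0::nat} else {}) \<union> (if c1 then {1} else {})))"
    unfolding lam_coeff_def Let_def mx e01 r0 r1 c0_def c1_def by simp
  also have "\<dots> = (if c0 then 1 else 0) + (if c1 then 1 else 0)"
    by (cases c0; cases c1; simp)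
  also have "\<dots> = (if a = b+1 \<or> b = a+1 \<or> (a = n-1 \<and> b = n-1) then 1 else 0)"
    unfolding c0_def c1_def using assms False by (cases "b + 1 < n"; cases "b - 1 = a"; simp; linarith)
  finally show ?thesis .
qed

lemma lam_rho_single:
  assumes "n \<ge> 2" 
  shows "lam_rho n (\<lambda>k. if k = 1 then s else 0) a b = s * lam_coeff n 1 b a"
proof -
  have "(\<Sum>k<n. (if k = 1 then s else 0) * lam_coeff n k b a) = (\<Sum>k\<in>{1}. s * lam_coeff n k b a)"
    using assms by (intro sum.mono_neutral_cong_right) auto
  then show ?thesis by (simp add: lam_rho_def)
qed

lemma lam_sigma_single:
  assumes "n \<ge> 2" 
  shows "lam_sigma n (\<lambda>k. if k = 1 then s else 0) = of_int s * (2 * cos (pi / real (2 * n + 1)))"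
proof -
  have "(\<Sum>k<n. of_int (if k = 1 then s else 0) * chebU k (cos (pi / real (2 * n + 1))))
      = (\<Sum>k\<in>{1}. of_int s * chebU k (cos (pi / real (2 * n + 1))))"
    using assms by (intro sum.mono_neutral_cong_right) auto
  then show ?thesis by (simp add: lam_sigma_def)
qed

lemma lam_sigma_zero: "lam_sigma n (\<lambda>k. 0) = 0" by (simp add: lam_sigma_def)
lemma lam_rho_zero: "lam_rho n (\<lambda>k. 0) a b = 0" by (simp add: lam_rho_def)

definition eI :: "nat \<Rightarrow> nat \<Rightarrow> nat \<Rightarrow> nat" where
  "eI n c a = (if a mod 2 = c then a else 2*n-1-a)"

lemma par_flip: "(a::nat) < 2*n \<Longrightarrow> (2*n-1-a) mod 2 \<noteq> a mod 2"
proof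
  assume a: "a < 2*n" and eq: "(2*n-1-a) mod 2 = a mod 2"
  define x where "x = 2*n-1-a"
  have s: "x + a = 2*(n-1) + 1" using a unfolding x_def by simp
  have "(x + a) mod 2 = (x mod 2 + a mod 2) mod 2" by (simp add: mod_add_eq)
  also have "\<dots> = (2 * (a mod 2)) mod 2" using eq unfolding x_def by simp
  also have "\<dots> = 0" by simp
  finally show False unfolding s by simp
qed

lemma adj_par: "j = i+1 \<or> i = j+1 \<Longrightarrow> (i::nat) mod 2 \<noteq> j mod 2"
  by presburger

lemma mod2_cases: "(a::nat) mod 2 = 0 \<or> a mod 2 = 1" by auto

lemma eI_facts:
  assumes "c \<in> {0,1::nat}" "a < n"
  shows "eI n c a < 2*n" "eI n c a mod 2 = c"
proof -
  show "eI n c a < 2*n" using assms unfolding eI_def by auto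
  show "eI n c a mod 2 = c"
  proof (cases "a mod 2 = c")
    case True then show ?thesis by (simp add: eI_def)
  next
    case False
    have "(2*n-1-a) mod 2 \<noteq> a mod 2" using par_flip[of a n] assms by auto
    then show ?thesis using False assms mod2_cases[of a] mod2_cases[of "2*n-1-a"] by (auto simp: eI_def)
  qed
qed

lemma eI_bij:
  assumes "c \<in> {0,1::nat}" "n \<ge> 2"
  shows "bij_betw (eI n c) {..<n} {v \<in> {0..<2*n}. F_I v = c}"
proof (rule bij_betw_imageI)
  show "inj_on (eI n c) {..<n}"
    unfolding inj_on_def eI_def using assms by (auto split: if_splits)
  show "eI n c ` {..<n} = {v \<in> {0..<2*n}. F_I v = c}"
  proof
    show "eI n c ` {..<n} \<subseteq> {v \<in> {0..<2*n}. F_I v = c}"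
      using assms eI_facts by (auto simp: F_I_def)
    show "{v \<in> {0..<2*n}. F_I v = c} \<subseteq> eI n c ` {..<n}"
    proof
      fix v assume v: "v \<in> {v \<in> {0..<2*n}. F_I v = c}"
      show "v \<in> eI n c ` {..<n}"
      proof (cases "v < n")
        case True
        then show ?thesis using v by (intro image_eqI[of _ _ v]) (auto simp: eI_def F_I_def)
      next
        case False
        have "(2*n-1-(2*n-1-v)) mod 2 \<noteq> (2*n-1-v) mod 2" using par_flip[of "2*n-1-v" n] v by auto
        moreover have "2*n-1-(2*n-1-v) = v" using v by auto
        ultimately have "(2*n-1-v) mod 2 \<noteq> c" using v by (auto simp: F_I_def)
        then have "eI n c (2*n-1-v) = v" using v by (auto simp: eI_def)
        then show ?thesis using False v by (intro image_eqI[of _ _ "2*n-1-v"]) auto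
      qed
    qed
  qed
qed

lemma two_ne: "2*(p::nat) \<noteq> 2*q+1" by presburger
lemma adj_key:
  assumes "a < n" "b < n" "n \<ge> 2"
  shows "(eI n 1 b = eI n 0 a + 1 \<or> eI n 0 a = eI n 1 b + 1) \<longleftrightarrow> (a = b+1 \<or> b = a+1 \<or> (a = n-1 \<and> b = n-1))"
proof -
  define p where "p = a div 2"
  define q where "q = b div 2"
  have pa: "a = 2*p \<or> a = 2*p+1" unfolding p_def by linarith
  have qb: "b = 2*q \<or> b = 2*q+1" unfolding q_def by linarith
  show ?thesis
  proof (cases "a = 2*p")
    case A: True
    show ?thesis
    proof (cases "b = 2*q")
      case True
      then show ?thesis using A assms two_ne[of p q] two_ne[of q p] unfolding eI_def by auto
    next
      case False
      then have B: "b = 2*q+1" using qb by auto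
      then show ?thesis using A assms two_ne[of p q] two_ne[of q p] unfolding eI_def by auto
    qed
  next
    case False
    then have A: "a = 2*p+1" using pa by auto
    show ?thesis
    proof (cases "b = 2*q")
      case True
      then show ?thesis using A assms two_ne[of p q] two_ne[of q p] unfolding eI_def by auto
    next
      case False
      then have B: "b = 2*q+1" using qb by auto
      then show ?thesis using A assms two_ne[of p q] two_ne[of q p] unfolding eI_def by auto
    qed
  qed
qed
lemma partI:
  assumes n: "n \<ge> 2"
  shows "block_form n {0..<2 * n} {0, 1} F_I (S_I n evsrc) (B_I n evsrc)"
  unfolding block_form_def
proof (intro exI[of _ "eI n"] conjI ballI)
  fix c :: nat assume "c \<in> {0,1}" then show "bij_betw (eI n c) {..<n} {v \<in> {0..<2*n}. F_I v = c}"
    using eI_bij n by blast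
next
  fix c d :: nat assume c: "c \<in> {0,1}" and d: "d \<in> {0,1}"
  show "\<exists>b'. lam_sigma n b' = B_I n evsrc c d \<and>
          (\<forall>a<n. \<forall>b<n. S_I n evsrc (eI n c a) (eI n d b) = lam_rho n b' a b)"
  proof (cases "c = d")
    case True
    have "S_I n evsrc (eI n c a) (eI n d b) = 0" if "a < n" "b < n" for a b
    proof -
      have "eI n c a mod 2 = eI n d b mod 2" using eI_facts[OF c that(1)] eI_facts[OF d that(2)] True by simp
      then show ?thesis using S_I_val[OF eI_facts(1)[OF c that(1)] eI_facts(1)[OF d that(2)]]
          adj_par[of "eI n d b" "eI n c a"]
        by auto
    qed
    moreover have "B_I n evsrc c d = 0" using True by (simp add: B_I_def exch_matrix_def)
    ultimately show ?thesis by (intro exI[of _ "\<lambda>k. 0"]) (simp add: lam_sigma_zero lam_rho_zero)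
  next
    case False
    define s :: int where "s = (if (c = 0) = evsrc then 1 else -1)"
    have B: "B_I n evsrc c d = of_int s * (2 * cos (pi / real (2 * n + 1)))"
    proof -
      from c d False have "(c = 0 \<and> d = 1) \<or> (c = 1 \<and> d = 0)" by auto
      then show ?thesis by (elim disjE conjE; cases evsrc) (simp_all add: B_I_def exch_matrix_def arrows_BI_def s_def)
    qed
    have SS: "S_I n evsrc (eI n c a) (eI n d b) = s * lam_coeff n 1 b a" if "a < n" "b < n" for a b
    proof -
      have adj: "(eI n d b = eI n c a + 1 \<or> eI n c a = eI n d b + 1) \<longleftrightarrow> (a = b+1 \<or> b = a+1 \<or> (a = n-1 \<and> b = n-1))"
        using False c d adj_key[OF that n] adj_key[OF that(2,1) n] by auto
      have ev: "even (eI n c a) = (c = 0)" using eI_facts(2)[OF c that(1)] c by (auto simp: even_iff_mod_2_eq_zero)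
      show ?thesis
        unfolding S_I_val[OF eI_facts(1)[OF c that(1)] eI_facts(1)[OF d that(2)]]
          lam_coeff_1[OF n that] adj ev s_def by auto
    qed
    show ?thesis
    proof (intro exI[of _ "\<lambda>k. if k = 1 then s else 0"] conjI allI impI)
      show "lam_sigma n (\<lambda>k. if k = 1 then s else 0) = B_I n evsrc c d"
        unfolding lam_sigma_single[OF n] B ..
      fix a b assume "a < n" "b < n"
      then show "S_I n evsrc (eI n c a) (eI n d b) = lam_rho n (\<lambda>k. if k = 1 then s else 0) a b"
        unfolding lam_rho_single[OF n] by (rule SS)
    qed
  qed
qed



lemma e00: "{j \<in> {0..0::nat}. P j} = (if P 0 then {0} else {})"
  by auto

lemma lam_coeff_0:
  assumes "a < n" "b < n"
  shows "lam_coeff n 0 b a = (if a = b then 1 else 0)"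
proof -
  have mm: "max 0 b = b" "min 0 b = 0" by auto
  show ?thesis unfolding lam_coeff_def Let_def mm e00 using assms by (simp add: psi_red_def)
qed

lemma lam_coeff_2:
  "lam_coeff 2 0 0 0 = 1" "lam_coeff 2 0 0 1 = 0" "lam_coeff 2 0 1 0 = 0" "lam_coeff 2 0 1 1 = 1"
  "lam_coeff 2 1 0 0 = 0" "lam_coeff 2 1 0 1 = 1" "lam_coeff 2 1 1 0 = 1" "lam_coeff 2 1 1 1 = 1"
  using lam_coeff_1[of 2 0 0] lam_coeff_1[of 2 1 0] lam_coeff_1[of 2 0 1] lam_coeff_1[of 2 1 1]
  by (simp_all add: lam_coeff_0)
lemma lam_coeff_2':
  "lam_coeff 2 0 0 (Suc 0) = 0" "lam_coeff 2 0 (Suc 0) 0 = 0" "lam_coeff 2 0 (Suc 0) (Suc 0) = 1"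
  "lam_coeff 2 (Suc 0) 0 0 = 0" "lam_coeff 2 (Suc 0) 0 (Suc 0) = 1" "lam_coeff 2 (Suc 0) (Suc 0) 0 = 1" "lam_coeff 2 (Suc 0) (Suc 0) (Suc 0) = 1"
  using lam_coeff_2 by simp_all

lemma lam_rho_2: "lam_rho 2 r a b = r 0 * lam_coeff 2 0 b a + r 1 * lam_coeff 2 1 b a"
  by (simp add: lam_rho_def numeral_2_eq_2)

lemma lam_sigma_2: "lam_sigma 2 r = of_int (r 0) + of_int (r 1) * (2 * cos (pi / 5))"
  by (simp add: lam_sigma_def numeral_2_eq_2)

lemma all2: "(\<forall>a<(2::nat). P a) \<longleftrightarrow> P 0 \<and> P 1"
  by (auto simp: less_Suc_eq numeral_2_eq_2)

definition eH :: "nat \<Rightarrow> nat \<Rightarrow> nat \<times> bool" where "eH i a = (i, a = 1)"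

lemma eH_bij: "i \<in> {1..m} \<Longrightarrow> bij_betw (eH i) {..<2} {v \<in> V_H m. F_H v = i}"
proof (rule bij_betw_imageI)
  show "inj_on (eH i) {..<2}" unfolding inj_on_def eH_def by (auto simp: less_Suc_eq numeral_2_eq_2)
  assume i: "i \<in> {1..m}"
  show "eH i ` {..<2} = {v \<in> V_H m. F_H v = i}"
  proof
    show "eH i ` {..<2} \<subseteq> {v \<in> V_H m. F_H v = i}" using i by (auto simp: eH_def V_H_def F_H_def)
    show "{v \<in> V_H m. F_H v = i} \<subseteq> eH i ` {..<2}"
    proof
      fix v assume v: "v \<in> {v \<in> V_H m. F_H v = i}"
      obtain j b where vb: "v = (j, b)" by (cases v)
      then have "v = eH i (if b then 1 else 0)" using v by (auto simp: eH_def F_H_def)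
      then show "v \<in> eH i ` {..<2}" by (auto simp: image_iff)
    qed
  qed
qed

definition bH :: "nat \<Rightarrow> (nat \<Rightarrow> bool) \<Rightarrow> nat \<Rightarrow> nat \<Rightarrow> nat \<Rightarrow> int" where
  "bH m dir c d = (\<lambda>k. if k = 0 then S_H m dir (c, False) (d, False)
                       else if k = 1 then S_H m dir (c, False) (d, True) else 0)"

lemma block_ok:
  assumes "S_H m dir (c, True) (d, False) = S_H m dir (c, False) (d, True)"
    "S_H m dir (c, True) (d, True) = S_H m dir (c, False) (d, False) + S_H m dir (c, False) (d, True)"
    "of_int (S_H m dir (c, False) (d, False)) + of_int (S_H m dir (c, False) (d, True)) * (2 * cos (pi / 5)) = B_H m dir c d"
  shows "\<exists>b'. lam_sigma 2 b' = B_H m dir c d \<and> (\<forall>a<2. \<forall>b<2. S_H m dir (eH c a) (eH d b) = lam_rho 2 b' a b)"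
  using assms
  by (intro exI[of _ "bH m dir c d"]) (simp add: all2 lam_sigma_2 lam_rho_2 lam_coeff_2 lam_coeff_2' bH_def eH_def)


lemma edges4: "edges_H 4 = {((1,False),(2,False)), ((2,False),(3,False)), ((1,True),(2,True)), ((2,True),(3,True)),
   ((3, False), (4, True)), ((3, True), (4, False)), ((3, True), (4, True))}"
  unfolding edges_H_def by (auto simp: le_Suc_eq numeral_eq_Suc)

lemma edges3: "edges_H 3 = {((1,False),(2,False)), ((1,True),(2,True)),
   ((2, False), (3, True)), ((2, True), (3, False)), ((2, True), (3, True))}"
  unfolding edges_H_def by (auto simp: le_Suc_eq numeral_eq_Suc)


lemma edges_fst: "m \<ge> 2 \<Longrightarrow> (u, v) \<in> edges_H m \<Longrightarrow> fst v = Suc (fst u)"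
  unfolding edges_H_def by auto

lemma mem_arrows_H: "(u, v) \<in> arrows_H m dir \<longleftrightarrow>
   ((u, v) \<in> edges_H m \<and> dir (fst u)) \<or> ((v, u) \<in> edges_H m \<and> \<not> dir (fst v))"
  unfolding arrows_H_def by blast

lemma S_H_gen:
  assumes "m \<ge> 2"
  shows "S_H m dir u v = (if (u, v) \<in> edges_H m then (if dir (fst u) then 1 else -1)
     else if (v, u) \<in> edges_H m then (if dir (fst v) then -1 else 1) else 0)"
proof (cases "(u, v) \<in> edges_H m")
  case True
  then have "(v, u) \<notin> edges_H m" using edges_fst[OF assms, of u v] edges_fst[OF assms, of v u] by auto
  then show ?thesis using True unfolding S_H_def exch_matrix_def mem_arrows_H by simp
next
  case False
  then show ?thesis unfolding S_H_def exch_matrix_def mem_arrows_H by simp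
qed

lemma H4: "c\<in>{1..4} \<Longrightarrow> d\<in>{1..4} \<Longrightarrow>
   S_H 4 dir (c, True) (d, False) = S_H 4 dir (c, False) (d, True) \<and>
   S_H 4 dir (c, True) (d, True) = S_H 4 dir (c, False) (d, False) + S_H 4 dir (c, False) (d, True) \<and>
   of_int (S_H 4 dir (c, False) (d, False)) + of_int (S_H 4 dir (c, False) (d, True)) * (2 * cos (pi / 5)) = B_H 4 dir c d"
proof -
  assume "c\<in>{1..4}" "d\<in>{1..4}"
  then have "c = 1 \<or> c = 2 \<or> c = 3 \<or> c = 4" "d = 1 \<or> d = 2 \<or> d = 3 \<or> d = 4" by auto
  then show ?thesis
    by (elim disjE) (simp_all add: S_H_gen edges4 B_H_def exch_matrix_def arrows_BH_def doubleton_eq_iff)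
qed


lemma H3: "c\<in>{1..3} \<Longrightarrow> d\<in>{1..3} \<Longrightarrow>
   S_H 3 dir (c, True) (d, False) = S_H 3 dir (c, False) (d, True) \<and>
   S_H 3 dir (c, True) (d, True) = S_H 3 dir (c, False) (d, False) + S_H 3 dir (c, False) (d, True) \<and>
   of_int (S_H 3 dir (c, False) (d, False)) + of_int (S_H 3 dir (c, False) (d, True)) * (2 * cos (pi / 5)) = B_H 3 dir c d"
proof -
  assume "c\<in>{1..3}" "d\<in>{1..3}"
  then have "c = 1 \<or> c = 2 \<or> c = 3" "d = 1 \<or> d = 2 \<or> d = 3" by auto
  then show ?thesis
    by (elim disjE) (simp_all add: S_H_gen edges3 B_H_def exch_matrix_def arrows_BH_def doubleton_eq_iff)
qed


lemma partH:
  assumes "m \<in> {3, 4}"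
  shows "block_form 2 (V_H m) {1..m} F_H (S_H m dir) (B_H m dir)"
  unfolding block_form_def
proof (intro exI[of _ eH] conjI ballI)
  fix c assume "c \<in> {1..m}" then show "bij_betw (eH c) {..<2} {v \<in> V_H m. F_H v = c}" by (rule eH_bij)
next
  fix c d assume c: "c \<in> {1..m}" and d: "d \<in> {1..m}"
  show "\<exists>b'. lam_sigma 2 b' = B_H m dir c d \<and> (\<forall>a<2. \<forall>b<2. S_H m dir (eH c a) (eH d b) = lam_rho 2 b' a b)"
  proof (cases "m = 3")
    case m3: True
    show ?thesis using H3[OF c[unfolded m3] d[unfolded m3], of dir] m3 by (intro block_ok) auto
  next
    case False then have m4: "m = 4" using assms by auto
    show ?thesis using H4[OF c[unfolded m4] d[unfolded m4], of dir] m4 by (intro block_ok) auto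
  qed
qed



theorem proposition4p9:
  shows "(\<forall>n::nat. \<forall>evsrc::bool. n \<ge> 2 \<longrightarrow>
            block_form n {0..<2 * n} {0, 1} F_I (S_I n evsrc) (B_I n evsrc)) \<and>
         (\<forall>m::nat. \<forall>dir::nat \<Rightarrow> bool. m \<in> {3, 4} \<longrightarrow>
            block_form 2 (V_H m) {1..m} F_H (S_H m dir) (B_H m dir))"
  using partI partH by blast

end
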